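(* Let $\mathcal S=(0,1]$ with Lebesgue measure $\mu$, let $\kappa(x,y)=\frac{1}{\max\{x,y\}}-1$, and fix $\lambda>0$. Then $\rho_1(\lambda\kappa)=1/(1+\lambda)$ and $\rho_k(\lambda\kappa)=\frac{k\lambda}{2(1+k\lambda)}\sum_{j=1}^{k-1}\rho_{k-j}(\lambda\kappa)\rho_j(\lambda\kappa)$ for $k\ge2$. Hence, for each $k\ge1$, $\rho_k(\lambda\kappa)$ is a rational function of $\lambda$ with poles only at $-1/j$, $j=1,\dots,k$. Moreover, each function $x\mapsto\rho_k(\lambda\kappa;x)$ is a polynomial in $x^\lambda$ whose coefficients are rational functions of $\lambda$, and these can be calculated recursively from $x\frac{d}{dx}\rho_k(\lambda\kappa;x)=k\lambda\rho_k(\lambda\kappa;x)-\sum_{j=1}^{k-1}j\lambda\,\rho_{k-j}(\lambda\kappa)\rho_j(\lambda\kappa;x)$, $k\ge1$, together with the boundary conditions $\rho_1(\lambda\kappa;1)=1$ and $\rho_k(\lambda\kappa;1)=0$ for $k\ge2$.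
   Context: For a kernel $\kappa'$ on $((0,1],\mu)$, the branching process $\mathfrak X_{\kappa'}(x)$ starts with one particle of type $x$; each particle of type $y$ independently has children whose types form a Poisson process on $(0,1]$ with intensity $\kappa'(y,z)\,dz$. $|\mathfrak X_{\kappa'}(x)|$ is its total population, $\rho_k(\kappa';x)=\mathbb P(|\mathfrak X_{\kappa'}(x)|=k)$ for $k\ge1$, and $\rho_k(\kappa')=\int_0^1\rho_k(\kappa';x)\,dx$. *)

theory Defs
  imports "HOL-Analysis.Analysis" "HOL-Computational_Algebra.Polynomial"
begin

(* total intensity of the children Poisson process of a particle of type x *)
definition kernel_mass :: "(real \<Rightarrow> real \<Rightarrow> real) \<Rightarrow> real \<Rightarrow> real" where
  "kernel_mass K x = (LINT y:{0<..1}|lborel. K x y)"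

definition compositions :: "nat \<Rightarrow> nat \<Rightarrow> nat list set" where
  "compositions n m = {ks. length ks = m \<and> (\<forall>k\<in>set ks. 1 \<le> k) \<and> sum_list ks = n}"

(* One-step (first-generation) decomposition of the branching process X_K(x):
   the root has N ~ Poisson(kernel_mass K x) children, whose types are, given N = m,
   iid with density K(x,.)/kernel_mass K x; their subtrees are independent copies
   X_K(y_i).  Hence P(|X_K(x)| = k) = sum_m P(N=m) P(sizes of the m subtrees sum to k-1).
   Given the table r j y = P(|X_K(y)| = j) for j < k, this computes the value for k. *)
definition rho_step :: "(real \<Rightarrow> real \<Rightarrow> real) \<Rightarrow> (nat \<Rightarrow> real \<Rightarrow> real) \<Rightarrow> nat \<Rightarrow> real \<Rightarrow> real" where
  "rho_step K r k x =
     (if k = 0 then 0 else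
        (\<Sum>m<k. (exp (- kernel_mass K x) * kernel_mass K x ^ m / fact m) *
           (\<Sum>ks\<in>compositions (k - 1) m.
              (\<Prod>i<m. (LINT y:{0<..1}|lborel. (K x y / kernel_mass K x) * r (ks ! i) y)))))"

(* rho_k(K; x) = P(|X_K(x)| = k); rho_step K r k only uses r j for j < k,
   so iterating k times from the zero table yields the correct value at index k. *)
definition rho_x :: "(real \<Rightarrow> real \<Rightarrow> real) \<Rightarrow> nat \<Rightarrow> real \<Rightarrow> real" where
  "rho_x K k x = ((rho_step K ^^ k) (\<lambda>_ _. 0)) k x"

definition rho :: "(real \<Rightarrow> real \<Rightarrow> real) \<Rightarrow> nat \<Rightarrow> real" where
  "rho K k = (LINT x:{0<..1}|lborel. rho_x K k x)"

definition kappa :: "real \<Rightarrow> real \<Rightarrow> real" where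
  "kappa x y = 1 / max x y - 1"

end

theory Submission
  imports Defs "HOL-Computational_Algebra.Formal_Power_Series"
begin

no_notation vec_nth (infixl \<open>$\<close> 90)
notation fps_nth (infixl \<open>$\<close> 75)


function cc :: "real \<Rightarrow> nat \<Rightarrow> nat \<Rightarrow> real" where
  "cc l k i = (if k = 0 \<or> i = 0 \<or> k < i then 0 else if k = 1 then 1
     else if i < k then
       (\<Sum>j=1..k-1. real j * (\<Sum>i'\<le>k-j. cc l (k-j) i' / (real i' * l + 1)) * cc l j i) / real (k - i)
     else - (\<Sum>i'<k. cc l k i'))"
  by pat_completeness auto
termination
  by (relation "measures [\<lambda>(l,k,i). k, \<lambda>(l,k,i). i]") auto

declare cc.simps[simp del]

definition rr :: "real \<Rightarrow> nat \<Rightarrow> real" where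
  "rr l k = (\<Sum>i\<le>k. cc l k i / (real i * l + 1))"

lemma cc_zero[simp]: "cc l 0 i = 0" "cc l k 0 = 0"
  by (simp_all add: cc.simps)

lemma cc_gt: "k < i \<Longrightarrow> cc l k i = 0"
  by (simp add: cc.simps)

lemma cc_one: "cc l 1 1 = 1" by (simp add: cc.simps)

lemma cc_lt: "2 \<le> k \<Longrightarrow> 1 \<le> i \<Longrightarrow> i < k \<Longrightarrow>
   cc l k i = (\<Sum>j=1..k-1. real j * rr l (k-j) * cc l j i) / real (k - i)"
  by (subst cc.simps) (auto simp: rr_def)

lemma cc_diag: "2 \<le> k \<Longrightarrow> cc l k k = - (\<Sum>i'<k. cc l k i')"
  by (subst cc.simps) auto

lemma cc_ode: "1 \<le> k \<Longrightarrow>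
  real i * cc l k i = real k * cc l k i - (\<Sum>j=1..k-1. real j * rr l (k-j) * cc l j i)"
proof -
  assume k: "1 \<le> k"
  consider "i = 0" | "k < i" | "k = 1" "i = 1" | "2 \<le> k" "1 \<le> i" "i < k" | "2 \<le> k" "i = k"
    using k by linarith
  then show ?thesis
  proof cases
    case 1 then show ?thesis by simp
  next
    case 2
    then have "(\<Sum>j=1..k-1. real j * rr l (k-j) * cc l j i) = 0"
      by (intro sum.neutral) (auto simp: cc_gt)
    then show ?thesis using 2 by (simp add: cc_gt)
  next
    case 3 then show ?thesis by simp
  next
    case 4
    then show ?thesis using cc_lt[OF 4, of l]
      by (simp add: of_nat_diff field_simps)
  next
    case 5
    then have "(\<Sum>j=1..k-1. real j * rr l (k-j) * cc l j i) = 0"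
      by (intro sum.neutral) (auto simp: cc_gt)
    then show ?thesis using 5 by simp
  qed
qed

lemma cc_sum1: "1 \<le> k \<Longrightarrow> (\<Sum>i\<le>k. cc l k i) = (if k = 1 then 1 else 0)"
proof -
  assume k: "1 \<le> k"
  show ?thesis
  proof (cases "k = 1")
    case True
    then show ?thesis by (simp add: cc.simps)
  next
    case False
    then have "2 \<le> k" using k by simp
    then show ?thesis using cc_diag[OF \<open>2 \<le> k\<close>, of l] False
      by (simp add: lessThan_Suc_atMost[symmetric])
  qed
qed



definition tp :: "real poly \<Rightarrow> real poly" where "tp p = [:0,1:] * pderiv p"

lemma coeff_tp: "coeff (tp p) i = real i * coeff p i"
  by (cases i) (auto simp: tp_def coeff_pderiv)

lemma tp_mult: "tp (p * q) = tp p * q + p * tp q"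
  by (simp add: tp_def pderiv_mult algebra_simps)
lemma tp_add: "tp (p + q) = tp p + tp q" by (simp add: tp_def pderiv_add algebra_simps)
lemma tp_diff: "tp (p - q) = tp p - tp q" by (simp add: tp_def pderiv_diff algebra_simps)
lemma tp_sum: "tp (sum f A) = (\<Sum>a\<in>A. tp (f a))"
  by (induction A rule: infinite_finite_induct) (auto simp: tp_add, auto simp add: tp_def)
lemma tp_const: "tp [:c:] = 0" by (simp add: tp_def)
lemma tp_of_nat_mult: "tp (of_nat n * p) = of_nat n * tp p"
  by (simp add: tp_def of_nat_poly pderiv_smult)

definition thet :: "real poly fps \<Rightarrow> real poly fps" where
  "thet F = Abs_fps (\<lambda>n. tp (F $ n))"

lemma thet_nth[simp]: "thet F $ n = tp (F $ n)" by (simp add: thet_def)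

lemma thet_mult: "thet (F * G) = thet F * G + F * thet G"
  by (rule fps_ext) (simp add: fps_mult_nth tp_sum tp_mult sum.distrib)
lemma thet_add: "thet (F + G) = thet F + thet G"
  by (rule fps_ext) (simp add: tp_add)
lemma thet_diff: "thet (F - G) = thet F - thet G"
  by (rule fps_ext) (simp add: tp_diff)

definition Dz :: "'a::comm_semiring_1 fps \<Rightarrow> 'a fps" where "Dz F = fps_X * fps_deriv F"

lemma Dz_nth: "Dz F $ n = of_nat n * (F $ n :: 'a::comm_ring_1)"
  by (cases n) (simp_all add: Dz_def)

lemma Dz_mult: "Dz (F * G) = Dz F * G + F * (Dz G :: 'a::comm_ring_1 fps)"
  by (simp add: Dz_def algebra_simps)
lemma Dz_add: "Dz (F + G) = Dz F + (Dz G :: 'a::comm_ring_1 fps)"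
  by (simp add: Dz_def algebra_simps)
lemma Dz_diff: "Dz (F - G) = Dz F - (Dz G :: 'a::comm_ring_1 fps)"
  by (simp add: Dz_def algebra_simps)
lemma Dz_one: "Dz (1 :: 'a::comm_ring_1 fps) = 0"
  by (simp add: Dz_def)
lemma Dz_zero: "Dz (0 :: 'a::comm_ring_1 fps) = 0"
  by (simp add: Dz_def)
lemma Dz_uminus: "Dz (- F) = - (Dz F :: 'a::comm_ring_1 fps)"
  by (simp add: Dz_def)

lemma thet_Dz: "thet (Dz F) = Dz (thet F)"
  by (rule fps_ext) (simp add: Dz_nth tp_of_nat_mult)

definition tconst :: "real poly fps \<Rightarrow> bool" where
  "tconst C \<longleftrightarrow> (\<forall>n. tp (C $ n) = 0)"

lemma thet_tconst: "tconst C \<Longrightarrow> thet C = 0"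
  by (rule fps_ext) (simp add: tconst_def)

lemma thet_tconst_mult: "tconst C \<Longrightarrow> thet (C * F) = C * thet F"
  by (simp add: thet_mult thet_tconst)

lemma tconst_one: "tconst 1"
  by (simp add: tconst_def tp_def fps_one_nth)

lemma tconst_diff: "tconst C \<Longrightarrow> tconst D \<Longrightarrow> tconst (C - D)"
  by (simp add: tconst_def tp_diff)

lemma tconst_Dz: "tconst C \<Longrightarrow> tconst (Dz C)"
  by (simp add: tconst_def Dz_nth tp_of_nat_mult)

definition LL :: "real poly fps \<Rightarrow> real poly fps \<Rightarrow> real poly fps" where
  "LL \<rho> F = thet F - (1 - \<rho>) * Dz F"

lemma LL_mult: "tconst \<rho> \<Longrightarrow> LL \<rho> (F * G) = LL \<rho> F * G + F * LL \<rho> G"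
  by (simp add: LL_def thet_mult Dz_mult algebra_simps)

lemma LL_Dz: "tconst \<rho> \<Longrightarrow> LL \<rho> (Dz F) = Dz (LL \<rho> F) - Dz \<rho> * Dz F"
  by (simp add: LL_def thet_Dz Dz_diff Dz_add Dz_mult Dz_one algebra_simps)

lemma LL_Z:
  assumes "tconst \<rho>" "LL \<rho> R = 0" "LL \<rho> G = - \<rho>"
  shows "LL \<rho> (Dz R - R - R * Dz G) = - Dz \<rho> * (Dz R - R - R * Dz G)"
proof -
  have d: "LL \<rho> (A - B) = LL \<rho> A - LL \<rho> B" for A B
    by (simp add: LL_def thet_diff Dz_diff algebra_simps)
  have a: "LL \<rho> (A + B) = LL \<rho> A + LL \<rho> B" for A B
    by (simp add: LL_def thet_add Dz_add algebra_simps)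
  show ?thesis
    using assms
    by (simp add: d a Dz_zero LL_mult LL_Dz Dz_uminus Dz_one algebra_simps)
qed


lemma tp_eig:
  assumes "tp p = of_nat n * p" "poly p 1 = 0"
  shows "p = 0"
proof -
  have c: "coeff p i = 0" if "i \<noteq> n" for i
  proof -
    have "real i * coeff p i = real n * coeff p i"
      using arg_cong[OF assms(1), of "\<lambda>q. coeff q i"]
      by (simp add: coeff_tp of_nat_poly)
    then show ?thesis using that by simp
  qed
  have "poly p 1 = (\<Sum>i\<le>degree p. coeff p i)"
    by (simp add: poly_altdef)
  also have "\<dots> = (\<Sum>i\<le>degree p. if i = n then coeff p n else 0)"
    by (intro sum.cong) (auto simp: c)
  also have "\<dots> = coeff p n"
    by (auto simp: coeff_eq_0)
  finally have "coeff p n = 0" using assms(2) by simp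
  then have "\<forall>i. coeff p i = 0" using c by metis
  then show ?thesis by (simp add: poly_eq_iff)
qed

lemma LL_uniq:
  assumes r0: "\<rho> $ 0 = 0" and L: "LL \<rho> Z = - Dz \<rho> * Z" and ev: "\<And>n. poly (Z $ n) 1 = 0"
  shows "Z = 0"
proof -
  have "Z $ n = 0" for n
  proof (induction n rule: less_induct)
    case (less n)
    have e: "thet Z $ n = ((1 - \<rho>) * Dz Z) $ n - (Dz \<rho> * Z) $ n"
      using arg_cong[OF L, of "\<lambda>F. F $ n"] by (simp add: LL_def algebra_simps)
    have s1: "((1 - \<rho>) * Dz Z) $ n = of_nat n * Z $ n"
    proof -
      have "((1 - \<rho>) * Dz Z) $ n = (\<Sum>i=0..n. (1 - \<rho>) $ i * Dz Z $ (n - i))"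
        by (rule fps_mult_nth)
      also have "\<dots> = (1 - \<rho>) $ 0 * Dz Z $ n + (\<Sum>i=Suc 0..n. (1 - \<rho>) $ i * Dz Z $ (n - i))"
        by (subst sum.atLeast_Suc_atMost) auto
      also have "(\<Sum>i=Suc 0..n. (1 - \<rho>) $ i * Dz Z $ (n - i)) = 0"
        by (intro sum.neutral) (auto simp: Dz_nth less)
      finally show ?thesis by (simp add: r0 Dz_nth)
    qed
    have s2: "(Dz \<rho> * Z) $ n = 0"
    proof -
      have "(Dz \<rho> * Z) $ n = (\<Sum>i=0..n. Dz \<rho> $ i * Z $ (n - i))"
        by (rule fps_mult_nth)
      also have "\<dots> = Dz \<rho> $ 0 * Z $ n + (\<Sum>i=Suc 0..n. Dz \<rho> $ i * Z $ (n - i))"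
        by (subst sum.atLeast_Suc_atMost) auto
      also have "(\<Sum>i=Suc 0..n. Dz \<rho> $ i * Z $ (n - i)) = 0"
        by (intro sum.neutral) (auto simp: less)
      finally show ?thesis by (simp add: Dz_nth)
    qed
    have "tp (Z $ n) = of_nat n * Z $ n" using e s1 s2 by simp
    then show ?case using tp_eig ev by blast
  qed
  then show ?thesis by (simp add: fps_eq_iff)
qed


lemma rr0[simp]: "rr l 0 = 0" by (simp add: rr_def)

lemma reidx: "(\<Sum>j=1..k-1. real j * rr l (k-j) * cc l j i) = (\<Sum>j\<le>k. rr l j * real (k-j) * cc l (k-j) i)"
proof -
  have "(\<Sum>j\<le>k. rr l j * real (k-j) * cc l (k-j) i) = (\<Sum>j\<in>{1..k-1}. rr l j * real (k-j) * cc l (k-j) i)"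
  proof (rule sum.mono_neutral_right)
    show "\<forall>j\<in>{..k} - {1..k-1}. rr l j * real (k - j) * cc l (k - j) i = 0"
    proof
      fix j assume "j \<in> {..k} - {1..k-1}"
      then have "j = 0 \<or> j = k" by auto
      then show "rr l j * real (k - j) * cc l (k - j) i = 0" by auto
    qed
  qed auto
  also have "\<dots> = (\<Sum>j=1..k-1. real j * rr l (k-j) * cc l j i)"
    by (rule sum.reindex_bij_witness[of _ "\<lambda>j. k - j" "\<lambda>j. k - j"]) auto
  finally show ?thesis by simp
qed

lemma cc_ode2: "real i * cc l k i = real k * cc l k i - (\<Sum>j\<le>k. rr l j * real (k-j) * cc l (k-j) i)"
proof (cases "k = 0")
  case True then show ?thesis by simp
next
  case False then show ?thesis using cc_ode[where k=k and i=i and l=l] reidx[where k=k and l=l and i=i] by simp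
qed

definition Pp :: "real \<Rightarrow> nat \<Rightarrow> real poly" where
  "Pp l k = (\<Sum>i\<le>k. monom (cc l k i) i)"
definition gam :: "real \<Rightarrow> nat \<Rightarrow> real" where
  "gam l k = (\<Sum>i\<le>k. cc l k i / (real i * (real i * l + 1)))"
definition Gp :: "real \<Rightarrow> nat \<Rightarrow> real poly" where
  "Gp l k = (\<Sum>i\<le>k. smult (cc l k i / (real i * (real i * l + 1))) (1 - monom 1 i))"

lemma coeff_Pp: "coeff (Pp l k) i = cc l k i"
  by (auto simp: Pp_def coeff_sum coeff_monom cc_gt)

lemma coeff_Gp: "coeff (Gp l k) m = (if m = 0 then gam l k else - cc l k m / (real m * (real m * l + 1)))"
proof -
  have "coeff (Gp l k) m = (\<Sum>i\<le>k. cc l k i / (real i * (real i * l + 1)) * ((if m = 0 then 1 else 0) - (if i = m then 1 else 0)))"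
    by (simp add: Gp_def coeff_sum coeff_monom coeff_1)
  also have "\<dots> = (if m = 0 then gam l k else - cc l k m / (real m * (real m * l + 1)))"
  proof (cases "m = 0")
    case True
    then show ?thesis
      by (auto simp: gam_def intro!: sum.cong)
  next
    case False
    then have "(\<Sum>i\<le>k. cc l k i / (real i * (real i * l + 1)) * ((if m = 0 then 1 else 0) - (if i = m then 1 else 0)))
      = (\<Sum>i\<le>k. - (if i = m then cc l k m / (real m * (real m * l + 1)) else 0))"
      by (intro sum.cong) auto
    also have "\<dots> = - (\<Sum>i\<le>k. if i = m then cc l k m / (real m * (real m * l + 1)) else 0)"
      by (simp add: sum_negf)
    also have "\<dots> = - cc l k m / (real m * (real m * l + 1))"
      using False by (subst sum.delta) (auto simp: cc_gt)
    finally show ?thesis using False by simp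
  qed
  finally show ?thesis .
qed

lemma poly_Gp1: "poly (Gp l k) 1 = 0"
  by (simp add: Gp_def poly_sum poly_monom)

lemma poly_Pp1: "poly (Pp l k) 1 = (if k = 1 then 1 else 0)"
proof (cases "k = 0")
  case True then show ?thesis by (simp add: Pp_def)
next
  case False
  then show ?thesis using cc_sum1[of k l] by (simp add: Pp_def poly_sum poly_monom)
qed

definition RF where "RF l = Abs_fps (Pp l)"
definition GF where "GF l = Abs_fps (Gp l)"
definition rhoF where "rhoF l = Abs_fps (\<lambda>k. [:rr l k:])"

lemma tconst_rhoF: "tconst (rhoF l)"
  by (simp add: tconst_def rhoF_def tp_const)

lemma conv_nth: "((1 - rhoF l) * Dz F) $ n = of_nat n * F $ n - (\<Sum>j\<le>n. [:rr l j:] * (of_nat (n-j) * F $ (n-j)))"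
proof -
  have "((1 - rhoF l) * Dz F) $ n = (\<Sum>j=0..n. (1 - rhoF l) $ j * Dz F $ (n - j))"
    by (rule fps_mult_nth)
  also have "\<dots> = (\<Sum>j=0..n. (if j = 0 then 1 else 0) * Dz F $ (n - j)) - (\<Sum>j=0..n. [:rr l j:] * Dz F $ (n - j))"
    by (simp add: rhoF_def fps_one_nth algebra_simps sum_subtractf)
  also have "(\<Sum>j=0..n. (if j = 0 then 1 else 0) * Dz F $ (n - j)) = Dz F $ n"
    by (simp add: if_distrib[of "\<lambda>x. x * _"] cong: if_cong)
  finally show ?thesis by (simp add: Dz_nth atLeast0AtMost)
qed

lemma LR: "LL (rhoF l) (RF l) = 0"
proof (rule fps_ext)
  fix n
  show "LL (rhoF l) (RF l) $ n = 0 $ n"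
  proof -
    have "coeff (LL (rhoF l) (RF l) $ n) i = 0" for i
      using cc_ode2[of i l n]
      by (simp add: LL_def conv_nth coeff_tp RF_def coeff_Pp of_nat_poly coeff_sum mult.assoc mult.left_commute)
    then show ?thesis by (simp add: poly_eq_iff)
  qed
qed


lemma gam_ext: "m \<le> K \<Longrightarrow> gam l m = (\<Sum>i\<le>K. cc l m i / (real i * (real i * l + 1)))"
  unfolding gam_def
  by (rule sum.mono_neutral_left) (auto simp: cc_gt)

lemma gam_ode: "rr l k = real k * gam l k - (\<Sum>j\<le>k. rr l j * real (k-j) * gam l (k-j))"
proof -
  have "rr l k = (\<Sum>i\<le>k. (real i * cc l k i) / (real i * (real i * l + 1)))"
    unfolding rr_def by (intro sum.cong) auto
  also have "\<dots> = (\<Sum>i\<le>k. (real k * cc l k i - (\<Sum>j\<le>k. rr l j * real (k-j) * cc l (k-j) i)) / (real i * (real i * l + 1)))"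
    by (intro sum.cong refl) (simp only: cc_ode2[symmetric])
  also have "\<dots> = real k * gam l k - (\<Sum>i\<le>k. \<Sum>j\<le>k. rr l j * real (k-j) * (cc l (k-j) i / (real i * (real i * l + 1))))"
    by (simp add: gam_def diff_divide_distrib sum_subtractf sum_distrib_left sum_divide_distrib)
  also have "(\<Sum>i\<le>k. \<Sum>j\<le>k. rr l j * real (k-j) * (cc l (k-j) i / (real i * (real i * l + 1))))
      = (\<Sum>j\<le>k. rr l j * real (k-j) * gam l (k-j))"
    by (subst sum.swap) (simp add: gam_ext[of "k - _" k] sum_distrib_left)
  finally show ?thesis .
qed

lemma LG: "LL (rhoF l) (GF l) = - rhoF l"
proof (rule fps_ext)
  fix n
  have "coeff (LL (rhoF l) (GF l) $ n) m = coeff ((- rhoF l) $ n) m" for m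
  proof (cases "m = 0")
    case True
    then show ?thesis
      using gam_ode[of l n]
      by (simp only: LL_def conv_nth fps_sub_nth) (simp add:  coeff_tp GF_def coeff_Gp of_nat_poly coeff_sum rhoF_def mult.assoc mult.left_commute)
  next
    case False
    have "real m * cc l n m - real n * cc l n m + (\<Sum>j\<le>n. rr l j * real (n-j) * cc l (n-j) m) = 0"
      using cc_ode2[of m l n] by simp
    then have "(real m * cc l n m - real n * cc l n m + (\<Sum>j\<le>n. rr l j * real (n-j) * cc l (n-j) m)) / (real m * (real m * l + 1)) = 0"
      by simp
    moreover have "coeff [:- rr l n:] m = 0" using False by (cases m) auto
    ultimately show ?thesis
      using False
      by (simp only: LL_def conv_nth fps_sub_nth) (simp add: sum_negf  coeff_tp GF_def coeff_Gp of_nat_poly coeff_sum rhoF_def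
          add_divide_distrib diff_divide_distrib sum_divide_distrib mult.assoc mult.left_commute)
  qed
  then show "LL (rhoF l) (GF l) $ n = (- rhoF l) $ n" by (simp add: poly_eq_iff)
qed

lemma Zzero: "Dz (RF l) - RF l - RF l * Dz (GF l) = 0"
proof (rule LL_uniq[of "rhoF l"])
  show "rhoF l $ 0 = 0" by (simp add: rhoF_def)
  show "LL (rhoF l) (Dz (RF l) - RF l - RF l * Dz (GF l)) = - Dz (rhoF l) * (Dz (RF l) - RF l - RF l * Dz (GF l))"
    by (rule LL_Z[OF tconst_rhoF LR LG])
  fix n
  have "poly ((RF l * Dz (GF l)) $ n) 1 = 0"
    by (simp add: fps_mult_nth poly_sum Dz_nth GF_def poly_Gp1 of_nat_poly)
  then show "poly ((Dz (RF l) - RF l - RF l * Dz (GF l)) $ n) 1 = 0"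
    by (simp add: Dz_nth RF_def poly_Pp1 of_nat_poly)
qed


definition evt :: "real \<Rightarrow> real poly fps \<Rightarrow> real fps" where
  "evt t F = Abs_fps (\<lambda>n. poly (F $ n) t)"

lemma evt_nth[simp]: "evt t F $ n = poly (F $ n) t" by (simp add: evt_def)
lemma evt_mult: "evt t (F * G) = evt t F * evt t G"
  by (rule fps_ext) (simp add: fps_mult_nth poly_sum)
lemma evt_diff: "evt t (F - G) = evt t F - evt t G"
  by (rule fps_ext) simp
lemma evt_Dz: "evt t (Dz F) = Dz (evt t F)"
  by (rule fps_ext) (simp add: Dz_nth of_nat_poly)
lemma evt_zero: "evt t 0 = 0" by (rule fps_ext) simp

lemma exp_sol:
  fixes R G :: "real fps"
  assumes R0: "R $ 0 = 0" and G0: "G $ 0 = 0" and eq: "Dz R = R + R * Dz G"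
  shows "R = fps_const (R $ 1) * fps_X * (fps_exp 1 oo G)"
proof -
  define E' where "E' = fps_exp (-1) oo G"
  define E where "E = fps_exp 1 oo G"
  have dE': "fps_deriv E' = - E' * fps_deriv G"
    unfolding E'_def using G0
    by (simp add: fps_compose_deriv fps_compose_mult_distrib fps_const_neg[symmetric] fps_compose_uminus del: fps_const_neg)
  have EE: "E' * E = 1"
  proof -
    have "fps_exp (-1) * fps_exp 1 = (1 :: real fps)"
      by (simp add: fps_exp_add_mult[symmetric])
    then show ?thesis unfolding E'_def E_def
      by (simp add: fps_compose_mult_distrib[OF G0, symmetric])
  qed
  define V where "V = R * E'"
  have DV: "Dz V = V"
    unfolding V_def using eq dE'
    by (simp add: Dz_mult Dz_def algebra_simps)
  have Vn: "V $ n = 0" if "n \<noteq> 1" for n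
  proof -
    have "real n * V $ n = V $ n" using arg_cong[OF DV, of "\<lambda>F. F $ n"] by (simp add: Dz_nth)
    then show ?thesis using that by (cases "V $ n = 0") auto
  qed
  have V1: "V $ 1 = R $ 1"
    by (simp add: V_def fps_mult_nth R0 E'_def sum.atLeast0_atMost_Suc)
  have "V = fps_const (R $ 1) * fps_X"
    using V1 by (intro fps_ext) (auto simp: Vn fps_X_def)
  moreover have "R = V * E" unfolding V_def by (simp add: mult.assoc EE)
  ultimately show ?thesis unfolding E_def by simp
qed


lemma Pp_formula:
  "poly (Pp l (Suc n)) t = t * (\<Sum>m=0..n. (evt t (GF l) ^ m) $ n / fact m)"
proof -
  define R where "R = evt t (RF l)"
  define G where "G = evt t (GF l)"
  have R0: "R $ 0 = 0" by (simp add: R_def RF_def Pp_def)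
  have G0: "G $ 0 = 0" by (simp add: G_def GF_def Gp_def)
  have "evt t (Dz (RF l) - RF l - RF l * Dz (GF l)) = 0"
    using Zzero[of l] by (simp add: evt_zero)
  then have eq: "Dz R = R + R * Dz G"
    by (simp add: R_def G_def evt_diff evt_mult evt_Dz) (simp add: diff_eq_eq add.commute)
  have R1: "R $ 1 = t"
    by (simp add: R_def RF_def Pp_def cc.simps poly_monom)
  have "R = fps_const t * fps_X * (fps_exp 1 oo G)"
    using exp_sol[OF R0 G0 eq] R1 by simp
  then have "R $ Suc n = t * (fps_exp 1 oo G) $ n"
    by (simp add: mult.assoc)
  then show ?thesis
    by (simp add: R_def RF_def fps_compose_nth G_def)
qed

lemma compositions_Suc:
  "compositions n (Suc m) = (\<Union>j\<in>{1..n}. (\<lambda>ks. j # ks) ` compositions (n - j) m)"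
proof (rule set_eqI)
  fix ks
  show "ks \<in> compositions n (Suc m) \<longleftrightarrow> ks \<in> (\<Union>j\<in>{1..n}. (\<lambda>ks. j # ks) ` compositions (n - j) m)"
  proof
    assume "ks \<in> compositions n (Suc m)"
    then obtain j ks' where ks: "ks = j # ks'" "length ks' = m" "1 \<le> j" "\<forall>k\<in>set ks'. 1 \<le> k"
        "j + sum_list ks' = n"
      by (cases ks) (auto simp: compositions_def)
    then show "ks \<in> (\<Union>j\<in>{1..n}. (\<lambda>ks. j # ks) ` compositions (n - j) m)"
      by (auto simp: compositions_def intro!: bexI[of _ j])
  next
    assume "ks \<in> (\<Union>j\<in>{1..n}. (\<lambda>ks. j # ks) ` compositions (n - j) m)"
    then show "ks \<in> compositions n (Suc m)"
      by (auto simp: compositions_def)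
  qed
qed

lemma compositions_finite: "finite (compositions n m)"
proof -
  have "compositions n m \<subseteq> {ks. set ks \<subseteq> {..n} \<and> length ks = m}"
    by (auto simp: compositions_def dest: member_le_sum_list)
  moreover have "finite {ks. set ks \<subseteq> {..n} \<and> length ks = m}"
    by (rule finite_lists_length_eq) auto
  ultimately show ?thesis by (rule finite_subset)
qed

lemma compositions_sum:
  fixes g :: "nat \<Rightarrow> real"
  assumes g0: "g 0 = 0"
  shows "(\<Sum>ks\<in>compositions n m. \<Prod>i<m. g (ks ! i)) = (Abs_fps g ^ m) $ n"
proof (induction m arbitrary: n)
  case 0
  have "compositions n 0 = (if n = 0 then {[]} else {})"
    by (auto simp: compositions_def)
  then show ?case by simp
next
  case (Suc m)
  have "(\<Sum>ks\<in>compositions n (Suc m). \<Prod>i<Suc m. g (ks ! i))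
      = (\<Sum>j\<in>{1..n}. \<Sum>ks\<in>(\<lambda>ks. j # ks) ` compositions (n - j) m. \<Prod>i<Suc m. g (ks ! i))"
    unfolding compositions_Suc
    by (rule sum.UNION_disjoint) (auto simp: compositions_finite)
  also have "\<dots> = (\<Sum>j\<in>{1..n}. \<Sum>ks\<in>compositions (n - j) m. g j * (\<Prod>i<m. g (ks ! i)))"
  proof (rule sum.cong[OF refl])
    fix j
    have "inj_on ((#) j) (compositions (n - j) m)" by (auto simp: inj_on_def)
    then show "(\<Sum>ks\<in>(#) j ` compositions (n - j) m. \<Prod>i<Suc m. g (ks ! i)) =
          (\<Sum>ks\<in>compositions (n - j) m. g j * (\<Prod>i<m. g (ks ! i)))"
      by (simp add: sum.reindex prod.lessThan_Suc_shift del: prod.lessThan_Suc)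
  qed
  also have "\<dots> = (\<Sum>j\<in>{1..n}. g j * (Abs_fps g ^ m) $ (n - j))"
    by (simp add: sum_distrib_left[symmetric] Suc.IH)
  also have "\<dots> = (\<Sum>j=0..n. g j * (Abs_fps g ^ m) $ (n - j))"
    by (rule sum.mono_neutral_left) (auto simp: g0 not_less_eq_eq)
  also have "\<dots> = (Abs_fps g ^ Suc m) $ n"
    by (simp add: fps_mult_nth)
  finally show ?case .
qed


lemma ftc_ioc:
  fixes f F :: "real \<Rightarrow> real"
  assumes ab: "a \<le> b" and cf: "continuous_on {a..b} f" and cF: "continuous_on {a..b} F"
    and d: "\<And>y. a < y \<Longrightarrow> y < b \<Longrightarrow> (F has_real_derivative f y) (at y)"
  shows "set_integrable lborel {a<..b} f \<and> (LINT y:{a<..b}|lborel. f y) = F b - F a"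
proof -
  have si: "set_integrable lborel {a..b} f"
    by (rule borel_integrable_atLeastAtMost'[OF cf])
  have "(f has_integral (F b - F a)) {a..b}"
    by (rule fundamental_theorem_of_calculus_interior[OF ab cF])
       (use d in \<open>auto simp: has_real_derivative_iff_has_vector_derivative[symmetric]\<close>)
  then have I: "(LINT y:{a..b}|lborel. f y) = F b - F a"
    using set_borel_integral_eq_integral(2)[OF si] by (simp add: integral_unique)
  have si2: "set_integrable lborel {a<..b} f"
    by (rule set_integrable_subset[OF si]) auto
  have m1: "set_borel_measurable lborel {a..b} f" "set_borel_measurable lborel {a<..b} f"
    using si si2 unfolding set_integrable_def set_borel_measurable_def
    by (auto intro: borel_measurable_integrable)
  have "(LINT y:{a<..b}|lborel. f y) = (LINT y:{a..b}|lborel. f y)"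
    by (rule set_integral_cong_set[OF m1]) (use AE_lborel_singleton[of a] in \<open>auto elim!: AE_mp\<close>)
  with I si2 show ?thesis by simp
qed


lemma cont_powr: "0 < a \<Longrightarrow> 0 \<le> c \<Longrightarrow> continuous_on {c..d} (\<lambda>y::real. y powr a)"
  by (rule continuous_on_powr') (auto intro: continuous_intros)

lemma deriv_powr: "0 < y \<Longrightarrow> ((\<lambda>y. y powr b) has_real_derivative b * y powr (b - 1)) (at y)"
  by (rule has_real_derivative_powr)

lemma kernel_mono:
  fixes l x a :: real
  assumes x: "0 < x" "x \<le> 1" and a: "0 < a"
  shows "set_integrable lborel {0<..1} (\<lambda>y. l * kappa x y * y powr a) \<and>
    (LINT y:{0<..1}|lborel. l * kappa x y * y powr a) = l * (1 - x powr a) / (a * (a + 1))"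
proof -
  let ?f = "\<lambda>y. l * kappa x y * y powr a"
  have p1: "set_integrable lborel {0<..x} ?f \<and> (LINT y:{0<..x}|lborel. ?f y)
      = l * (1/x - 1) * x powr (a+1) / (a+1) - l * (1/x - 1) * 0 powr (a+1) / (a+1)"
  proof (rule ftc_ioc)
    show "continuous_on {0..x} ?f"
    proof -
      have "continuous_on {0..x} (\<lambda>y. l * (1/x - 1) * y powr a)"
        by (intro continuous_intros cont_powr a) auto
      then show ?thesis
        by (rule continuous_on_cong[THEN iffD1, rotated 2]) (auto simp: kappa_def max_def)
    qed
    show "continuous_on {0..x} (\<lambda>y. l * (1/x - 1) * y powr (a+1) / (a+1))"
      by (intro continuous_intros cont_powr) (use a in auto)
    fix y assume y: "0 < y" "y < x"
    have "((\<lambda>y. l * (1/x - 1) * y powr (a+1) / (a+1)) has_real_derivative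
        l * (1/x - 1) * ((a+1) * y powr (a + 1 - 1)) / (a+1)) (at y)"
      by (intro DERIV_cdivide DERIV_cmult deriv_powr y)
    then show "((\<lambda>y. l * (1/x - 1) * y powr (a+1) / (a+1)) has_real_derivative ?f y) (at y)"
      using y a by (simp add: kappa_def max_def mult.assoc)
  qed (use x in auto)
  have p2: "set_integrable lborel {x<..1} ?f \<and> (LINT y:{x<..1}|lborel. ?f y)
      = l * (1 powr a / a - 1 powr (a+1) / (a+1)) - l * (x powr a / a - x powr (a+1) / (a+1))"
  proof (rule ftc_ioc)
    show "continuous_on {x..1} ?f"
    proof -
      have "continuous_on {x..1} (\<lambda>y. l * (1/y - 1) * y powr a)"
        by (intro continuous_intros cont_powr a) (use x in auto)
      then show ?thesis
        by (rule continuous_on_cong[THEN iffD1, rotated 2]) (auto simp: kappa_def max_def)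
    qed
    show "continuous_on {x..1} (\<lambda>y. l * (y powr a / a - y powr (a+1) / (a+1)))"
      by (intro continuous_intros cont_powr) (use a x in auto)
    fix y assume y: "x < y" "y < 1"
    have y0: "0 < y" using x y by simp
    have "((\<lambda>y. l * (y powr a / a - y powr (a+1) / (a+1))) has_real_derivative
        l * ((a * y powr (a - 1)) / a - ((a+1) * y powr (a + 1 - 1)) / (a+1))) (at y)"
      by (intro DERIV_cmult DERIV_diff DERIV_cdivide deriv_powr y0)
    moreover have "l * ((a * y powr (a - 1)) / a - ((a+1) * y powr (a + 1 - 1)) / (a+1)) = ?f y"
    proof -
      have e: "y powr (a - 1) = y powr a / y" using y0 by (simp add: powr_diff)
      have "y + a * y > 0" "a + 1 > 0" using y0 a by (auto simp: add_pos_pos)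
      then show ?thesis using y0 a y by (simp add: e kappa_def max_def field_simps)
    qed
    ultimately show "((\<lambda>y. l * (y powr a / a - y powr (a+1) / (a+1))) has_real_derivative ?f y) (at y)"
      by metis
  qed (use x in auto)
  have U: "{0<..1} = {0<..x} \<union> {x<..1::real}" using x by auto
  have si: "set_integrable lborel {0<..1} ?f"
    unfolding U using p1 p2 by (intro set_integrable_Un) auto
  have "(LINT y:{0<..1}|lborel. ?f y) = (LINT y:{0<..x}|lborel. ?f y) + (LINT y:{x<..1}|lborel. ?f y)"
    unfolding U using p1 p2 by (intro set_integral_Un) auto
  also have "\<dots> = l * (1 - x powr a) / (a * (a + 1))"
  proof -
    have e1: "(LINT y:{0<..x}|lborel. ?f y) = l * (1/x - 1) * x powr (a+1) / (a+1) - l * (1/x - 1) * 0 powr (a+1) / (a+1)"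
      using p1 by blast
    have e2: "(LINT y:{x<..1}|lborel. ?f y) = l * (1 powr a / a - 1 powr (a+1) / (a+1)) - l * (x powr a / a - x powr (a+1) / (a+1))"
      using p2 by blast
    have xa: "x powr (a+1) = x powr a * x" using x by (simp add: powr_add)
    have alg: "l * (1/x - 1) * (X * x) / (a+1) - l * (1/x - 1) * 0 / (a+1) +
       (l * (1 / a - 1 / (a+1)) - l * (X / a - X * x / (a+1))) = l * (1 - X) / (a * (a + 1))" for X
    proof -
      have "a + 1 \<noteq> 0" "a \<noteq> 0" "x \<noteq> 0" "a + a * a \<noteq> 0" using a x by (auto, smt (verit) mult_pos_pos)
      moreover have h: "l * (1/x - 1) * (X * x) / (a+1) = l * (1 - x) * X / (a+1)"
      proof -
        have h0: "(1/x - 1) * x = 1 - x" using \<open>x \<noteq> 0\<close> by (simp add: field_simps)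
        have "l * (1/x - 1) * (X * x) = l * (1 - x) * X" by (metis h0 mult.assoc mult.commute)
        then show ?thesis by simp
      qed
      moreover have "l * (1 - x) * X / b + (l * (1 / a - 1 / b) - l * (X / a - X * x / b)) = l * (1 - X) / (a * b)"
        if b: "b = a + 1" for b
      proof -
        have "b \<noteq> 0" using b a by simp
        then have "l * (1 - x) * X / b + (l * (1 / a - 1 / b) - l * (X / a - X * x / b)) = 
           (l * (1 - x) * X * a + l * (b - a) - l * (X * b - X * x * a)) / (a * b)"
          using \<open>a \<noteq> 0\<close> by (simp add: field_simps)
        also have "\<dots> = l * (1 - X) / (a * b)" using b by (simp add: algebra_simps)
        finally show ?thesis .
      qed
      ultimately show ?thesis unfolding h by simp
    qed
    show ?thesis using x a by (simp only: e1 e2 xa powr_one_eq_one powr_0 alg)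
  qed
  finally show ?thesis using si by simp
qed

lemma kernel_mass_val:
  fixes l x :: real
  assumes x: "0 < x" "x \<le> 1"
  shows "kernel_mass (\<lambda>x y. l * kappa x y) x = - l * ln x"
proof -
  let ?f = "\<lambda>y. l * kappa x y"
  have p1: "set_integrable lborel {0<..x} ?f \<and> (LINT y:{0<..x}|lborel. ?f y)
      = l * (1/x - 1) * x - l * (1/x - 1) * 0"
  proof (rule ftc_ioc)
    show "continuous_on {0..x} ?f"
    proof -
      have "continuous_on {0..x} (\<lambda>y. l * (1/x - 1))"
        by (intro continuous_intros)
      then show ?thesis
        by (rule continuous_on_cong[THEN iffD1, rotated 2]) (auto simp: kappa_def max_def)
    qed
    fix y assume y: "0 < y" "y < x"
    have "((\<lambda>y. l * (1/x - 1) * y) has_real_derivative l * (1/x - 1)) (at y)"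
      by (auto intro!: derivative_eq_intros)
    then show "((\<lambda>y. l * (1/x - 1) * y) has_real_derivative ?f y) (at y)"
      using y by (simp add: kappa_def max_def)
  qed (use x in \<open>auto intro!: continuous_intros\<close>)
  have p2: "set_integrable lborel {x<..1} ?f \<and> (LINT y:{x<..1}|lborel. ?f y)
      = l * (ln 1 - 1) - l * (ln x - x)"
  proof (rule ftc_ioc)
    show "continuous_on {x..1} ?f"
    proof -
      have "continuous_on {x..1} (\<lambda>y. l * (1/y - 1))"
        by (intro continuous_intros) (use x in auto)
      then show ?thesis
        by (rule continuous_on_cong[THEN iffD1, rotated 2]) (auto simp: kappa_def max_def)
    qed
    show "continuous_on {x..1} (\<lambda>y. l * (ln y - y))"
      by (intro continuous_intros) (use x in auto)
    fix y assume y: "x < y" "y < 1"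
    have y0: "0 < y" using x y by simp
    have "((\<lambda>y. l * (ln y - y)) has_real_derivative l * (1 / y - 1)) (at y)"
      using y0 by (auto intro!: derivative_eq_intros)
    then show "((\<lambda>y. l * (ln y - y)) has_real_derivative ?f y) (at y)"
      using y by (simp add: kappa_def max_def)
  qed (use x in auto)
  have U: "{0<..1} = {0<..x} \<union> {x<..1::real}" using x by auto
  have "(LINT y:{0<..1}|lborel. ?f y) = (LINT y:{0<..x}|lborel. ?f y) + (LINT y:{x<..1}|lborel. ?f y)"
    unfolding U using p1 p2 by (intro set_integral_Un) auto
  also have "\<dots> = - l * ln x"
  proof -
    have e1: "(LINT y:{0<..x}|lborel. ?f y) = l * (1/x - 1) * x" using p1 by simp
    have e2: "(LINT y:{x<..1}|lborel. ?f y) = l * (ln 1 - 1) - l * (ln x - x)" using p2 by simp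
    show ?thesis using x by (simp only: e1 e2) (simp add: field_simps)
  qed
  finally show ?thesis by (simp add: kernel_mass_def)
qed

lemma plain_mono:
  fixes a :: real
  assumes a: "0 < a"
  shows "set_integrable lborel {0<..1} (\<lambda>y. y powr a) \<and>
    (LINT y:{0<..1}|lborel. y powr a) = 1 / (a + 1)"
proof -
  have "set_integrable lborel {0<..1} (\<lambda>y. y powr a) \<and>
    (LINT y:{0<..1}|lborel. y powr a) = 1 powr (a+1) / (a+1) - 0 powr (a+1) / (a+1)"
  proof (rule ftc_ioc)
    show "continuous_on {0..1} (\<lambda>y. y powr a)" by (rule cont_powr[OF a]) auto
    show "continuous_on {0..1} (\<lambda>y. y powr (a+1) / (a+1))"
      by (intro continuous_intros cont_powr) (use a in auto)
    fix y :: real assume y: "0 < y" "y < 1"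
    have "((\<lambda>y. y powr (a+1) / (a+1)) has_real_derivative ((a+1) * y powr (a + 1 - 1)) / (a+1)) (at y)"
      by (intro DERIV_cdivide deriv_powr y)
    then show "((\<lambda>y. y powr (a+1) / (a+1)) has_real_derivative y powr a) (at y)"
      using a by simp
  qed auto
  then show ?thesis by simp
qed


lemma set_int_sum:
  fixes f :: "'i \<Rightarrow> 'a \<Rightarrow> real"
  assumes "finite I" "\<And>i. i \<in> I \<Longrightarrow> set_integrable M A (f i)"
  shows "set_integrable M A (\<lambda>y. \<Sum>i\<in>I. f i y) \<and>
    (LINT y:A|M. (\<Sum>i\<in>I. f i y)) = (\<Sum>i\<in>I. LINT y:A|M. f i y)"
  using assms
proof (induction I rule: finite_induct)
  case empty
  then show ?case by (simp add: set_integrable_def)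
next
  case (insert a I)
  then have "set_integrable M A (f a)" "set_integrable M A (\<lambda>y. \<Sum>i\<in>I. f i y)"
    "(LINT y:A|M. (\<Sum>i\<in>I. f i y)) = (\<Sum>i\<in>I. LINT y:A|M. f i y)" by auto
  then show ?case using insert.hyps
    by (simp add: set_integral_add)
qed

lemma poly_Pp_y:
  assumes "0 < y"
  shows "poly (Pp l j) (y powr l) = (\<Sum>i\<in>{1..j}. cc l j i * y powr (real i * l))"
proof -
  have "poly (Pp l j) (y powr l) = (\<Sum>i\<le>j. cc l j i * y powr (real i * l))"
    using assms by (simp add: Pp_def poly_sum poly_monom powr_power)
  also have "\<dots> = (\<Sum>i\<in>{1..j}. cc l j i * y powr (real i * l))"
    by (rule sum.mono_neutral_right) (auto simp: not_less_eq_eq)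
  finally show ?thesis .
qed

lemma poly_Gp_x:
  assumes "0 < x"
  shows "poly (Gp l j) (x powr l) = (\<Sum>i\<in>{1..j}. cc l j i / (real i * (real i * l + 1)) * (1 - x powr (real i * l)))"
proof -
  have "poly (Gp l j) (x powr l) = (\<Sum>i\<le>j. cc l j i / (real i * (real i * l + 1)) * (1 - x powr (real i * l)))"
    using assms by (simp add: Gp_def poly_sum poly_monom powr_power)
  also have "\<dots> = (\<Sum>i\<in>{1..j}. cc l j i / (real i * (real i * l + 1)) * (1 - x powr (real i * l)))"
    by (rule sum.mono_neutral_right) (auto simp: not_less_eq_eq)
  finally show ?thesis .
qed

lemma int_Pp:
  fixes l :: real
  assumes l: "0 < l"
  shows "set_integrable lborel {0<..1} (\<lambda>y. poly (Pp l j) (y powr l)) \<and>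
    (LINT y:{0<..1}|lborel. poly (Pp l j) (y powr l)) = rr l j"
proof -
  let ?g = "\<lambda>i y. cc l j i * y powr (real i * l)"
  have each: "set_integrable lborel {0<..1} (?g i) \<and> (LINT y:{0<..1}|lborel. ?g i y) = cc l j i / (real i * l + 1)"
    if "i \<in> {1..j}" for i
  proof -
    have a: "0 < real i * l" using that l by simp
    from plain_mono[OF a] show ?thesis by (simp add: add.commute)
  qed
  have S: "set_integrable lborel {0<..1} (\<lambda>y. \<Sum>i\<in>{1..j}. ?g i y) \<and>
    (LINT y:{0<..1}|lborel. (\<Sum>i\<in>{1..j}. ?g i y)) = (\<Sum>i\<in>{1..j}. LINT y:{0<..1}|lborel. ?g i y)"
    by (rule set_int_sum) (use each in simp_all)
  have eqf: "\<And>y. y \<in> {0<..1} \<Longrightarrow> poly (Pp l j) (y powr l) = (\<Sum>i\<in>{1..j}. ?g i y)"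
    using poly_Pp_y by auto
  have "set_integrable lborel {0<..1} (\<lambda>y. poly (Pp l j) (y powr l))"
  proof -
    have "set_integrable lborel {0<..1} (\<lambda>y. poly (Pp l j) (y powr l)) = set_integrable lborel {0<..1} (\<lambda>y. \<Sum>i\<in>{1..j}. ?g i y)"
      by (rule set_integrable_cong) (auto simp: eqf)
    then show ?thesis using conjunct1[OF S] by simp
  qed
  moreover have "(LINT y:{0<..1}|lborel. poly (Pp l j) (y powr l)) = (\<Sum>i\<in>{1..j}. cc l j i / (real i * l + 1))"
  proof -
    have "(LINT y:{0<..1}|lborel. poly (Pp l j) (y powr l)) = (LINT y:{0<..1}|lborel. (\<Sum>i\<in>{1..j}. ?g i y))"
      by (rule set_lebesgue_integral_cong) (use eqf in auto)
    also have "\<dots> = (\<Sum>i\<in>{1..j}. LINT y:{0<..1}|lborel. ?g i y)"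
      by (rule conjunct2[OF S])
    also have "\<dots> = (\<Sum>i\<in>{1..j}. cc l j i / (real i * l + 1))"
      by (rule sum.cong[OF refl]) (rule conjunct2[OF each], assumption)
    finally show ?thesis .
  qed
  moreover have "(\<Sum>i\<in>{1..j}. cc l j i / (real i * l + 1)) = rr l j"
    unfolding rr_def by (rule sum.mono_neutral_left) (auto simp: not_less_eq_eq)
  ultimately show ?thesis by simp
qed

lemma int_KPp:
  fixes l x :: real
  assumes l: "0 < l" and x: "0 < x" "x \<le> 1"
  shows "(LINT y:{0<..1}|lborel. l * kappa x y * poly (Pp l j) (y powr l)) = poly (Gp l j) (x powr l)"
proof -
  let ?g = "\<lambda>i y. cc l j i * (l * kappa x y * y powr (real i * l))"
  have each: "set_integrable lborel {0<..1} (?g i) \<and> (LINT y:{0<..1}|lborel. ?g i y)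
     = cc l j i / (real i * (real i * l + 1)) * (1 - x powr (real i * l))"
    if "i \<in> {1..j}" for i
  proof -
    have a: "0 < real i * l" using that l by simp
    have i0: "real i \<noteq> 0" using that by simp
    from kernel_mono[OF x a, of l] have k: "set_integrable lborel {0<..1} (\<lambda>y. l * kappa x y * y powr (real i * l))"
      "(LINT y:{0<..1}|lborel. l * kappa x y * y powr (real i * l)) = l * (1 - x powr (real i * l)) / (real i * l * (real i * l + 1))"
      by auto
    have "l * (1 - x powr (real i * l)) / (real i * l * (real i * l + 1)) = (1 - x powr (real i * l)) / (real i * (real i * l + 1))"
    proof -
      have "real i * l * (real i * l + 1) = l * (real i * (real i * l + 1))" by (simp only: mult_ac)
      moreover have "l * (1 - x powr (real i * l)) / (l * (real i * (real i * l + 1))) = (1 - x powr (real i * l)) / (real i * (real i * l + 1))"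
        using l by (rule mult_divide_mult_cancel_left[OF less_imp_neq[symmetric]])
      ultimately show ?thesis by simp
    qed
    then show ?thesis using k
      by (simp only: set_integral_mult_right set_integrable_mult_right times_divide_eq_right simp_thms)
         (simp add: field_simps)
  qed
  have S: "set_integrable lborel {0<..1} (\<lambda>y. \<Sum>i\<in>{1..j}. ?g i y) \<and>
    (LINT y:{0<..1}|lborel. (\<Sum>i\<in>{1..j}. ?g i y)) = (\<Sum>i\<in>{1..j}. LINT y:{0<..1}|lborel. ?g i y)"
    by (rule set_int_sum) (use each in simp_all)
  have eqf: "\<And>y. y \<in> {0<..1} \<Longrightarrow> l * kappa x y * poly (Pp l j) (y powr l) = (\<Sum>i\<in>{1..j}. ?g i y)"
  proof -
    fix y :: real assume "y \<in> {0<..1}"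
    then have "poly (Pp l j) (y powr l) = (\<Sum>i\<in>{1..j}. cc l j i * y powr (real i * l))"
      using poly_Pp_y by auto
    then show "l * kappa x y * poly (Pp l j) (y powr l) = (\<Sum>i\<in>{1..j}. ?g i y)"
      by (simp add: sum_distrib_left mult.left_commute)
  qed
  have "(LINT y:{0<..1}|lborel. l * kappa x y * poly (Pp l j) (y powr l)) = (LINT y:{0<..1}|lborel. (\<Sum>i\<in>{1..j}. ?g i y))"
    by (rule set_lebesgue_integral_cong) (use eqf in auto)
  also have "\<dots> = (\<Sum>i\<in>{1..j}. LINT y:{0<..1}|lborel. ?g i y)"
    by (rule conjunct2[OF S])
  also have "\<dots> = (\<Sum>i\<in>{1..j}. cc l j i / (real i * (real i * l + 1)) * (1 - x powr (real i * l)))"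
    by (rule sum.cong[OF refl]) (rule conjunct2[OF each], assumption)
  also have "\<dots> = poly (Gp l j) (x powr l)"
    using poly_Gp_x[OF x(1)] by simp
  finally show ?thesis .
qed


lemma rho_step_cong:
  assumes "\<And>i. i < k \<Longrightarrow> r i = r' i"
  shows "rho_step K r k = rho_step K r' k"
proof (rule ext)
  fix x
  have "(\<Prod>i<m. (LINT y:{0<..1}|lborel. (K x y / kernel_mass K x) * r (ks ! i) y))
      = (\<Prod>i<m. (LINT y:{0<..1}|lborel. (K x y / kernel_mass K x) * r' (ks ! i) y))"
    if "ks \<in> compositions (k - 1) m" "k \<noteq> 0" for ks m
  proof (rule prod.cong[OF refl])
    fix i assume "i \<in> {..<m}"
    then have "ks ! i \<in> set ks" using that by (auto simp: compositions_def)
    then have "ks ! i \<le> sum_list ks" by (rule member_le_sum_list) auto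
    then have "ks ! i < k" using that by (auto simp: compositions_def)
    then show "(LINT y:{0<..1}|lborel. (K x y / kernel_mass K x) * r (ks ! i) y)
      = (LINT y:{0<..1}|lborel. (K x y / kernel_mass K x) * r' (ks ! i) y)"
      using assms by simp
  qed
  then show "rho_step K r k x = rho_step K r' k x"
    unfolding rho_step_def by (auto intro!: sum.cong)
qed

lemma iter_stable:
  "j \<le> n \<Longrightarrow> ((rho_step K ^^ n) (\<lambda>_ _. 0)) j = ((rho_step K ^^ j) (\<lambda>_ _. 0)) j"
proof (induction j arbitrary: n rule: less_induct)
  case (less j)
  show ?case
  proof (cases j)
    case 0
    then show ?thesis
      by (cases n) (auto simp: rho_step_def)
  next
    case (Suc j')
    then obtain n' where n: "n = Suc n'" using less.prems by (cases n) auto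
    have "rho_step K ((rho_step K ^^ n') (\<lambda>_ _. 0)) j = rho_step K ((rho_step K ^^ j') (\<lambda>_ _. 0)) j"
    proof (rule rho_step_cong)
      fix i assume "i < j"
      then show "(rho_step K ^^ n') (\<lambda>_ _. 0) i = (rho_step K ^^ j') (\<lambda>_ _. 0) i"
        using less.IH[of i n'] less.IH[of i j'] less.prems n Suc by simp
    qed
    then show ?thesis using n Suc by simp
  qed
qed

lemma rho_x_step: "rho_x K k x = rho_step K (\<lambda>i. rho_x K i) k x"
proof (cases k)
  case 0
  then show ?thesis by (simp add: rho_x_def rho_step_def)
next
  case (Suc k')
  have "rho_step K ((rho_step K ^^ k') (\<lambda>_ _. 0)) k = rho_step K (\<lambda>i. rho_x K i) k"
  proof (rule rho_step_cong)
    fix i assume "i < k"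
    then show "(rho_step K ^^ k') (\<lambda>_ _. 0) i = (\<lambda>i. rho_x K i) i"
      using iter_stable[of i k' K] Suc by (auto simp: rho_x_def[abs_def])
  qed
  then show ?thesis using Suc by (simp add: rho_x_def)
qed


lemma rho_x_poly:
  fixes l :: real
  assumes l: "0 < l"
  shows "1 \<le> k \<Longrightarrow> x \<in> {0<..1} \<Longrightarrow> rho_x (\<lambda>x y. l * kappa x y) k x = poly (Pp l k) (x powr l)"
proof (induction k arbitrary: x rule: less_induct)
  case (less k)
  define K where "K = (\<lambda>x y. l * kappa x y)"
  have x: "0 < x" "x \<le> 1" using less.prems by auto
  define M where "M = kernel_mass K x"
  have M: "M = - l * ln x" unfolding M_def K_def by (rule kernel_mass_val[OF x])
  define t where "t = x powr l"
  define g where "g = (\<lambda>j. poly (Gp l j) t)"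
  have eM: "exp (- M) = t" using x by (simp add: M t_def powr_def)
  have intg: "(LINT y:{0<..1}|lborel. (K x y / M) * rho_x K j y) = (1 / M) * g j"
    if "1 \<le> j" "j < k" for j
  proof -
    have "(LINT y:{0<..1}|lborel. (K x y / M) * rho_x K j y)
        = (LINT y:{0<..1}|lborel. (1 / M) * (l * kappa x y * poly (Pp l j) (y powr l)))"
      by (rule set_lebesgue_integral_cong) (use that less.IH in \<open>auto simp: K_def\<close>)
    also have "\<dots> = (1 / M) * g j"
      by (simp only: set_integral_mult_right int_KPp[OF l x] g_def t_def)
    finally show ?thesis .
  qed
  have k0: "k \<noteq> 0" using less.prems by simp
  have prodeq: "(\<Prod>i<m. (LINT y:{0<..1}|lborel. (K x y / M) * rho_x K (ks ! i) y)) = (1 / M) ^ m * (\<Prod>i<m. g (ks ! i))"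
    if "ks \<in> compositions (k - 1) m" for ks m
  proof -
    have "(\<Prod>i<m. (LINT y:{0<..1}|lborel. (K x y / M) * rho_x K (ks ! i) y)) = (\<Prod>i<m. (1 / M) * g (ks ! i))"
    proof (rule prod.cong[OF refl])
      fix i assume "i \<in> {..<m}"
      then have "ks ! i \<in> set ks" using that by (auto simp: compositions_def)
      moreover have "ks ! i \<le> sum_list ks" using \<open>ks ! i \<in> set ks\<close> by (rule member_le_sum_list) auto
      ultimately have "ks ! i \<le> sum_list ks" "1 \<le> ks ! i" using that
        by (auto simp: compositions_def)
      then have "1 \<le> ks ! i" "ks ! i < k" using that k0 by (auto simp: compositions_def)
      then show "(LINT y:{0<..1}|lborel. (K x y / M) * rho_x K (ks ! i) y) = (1 / M) * g (ks ! i)"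
        by (rule intg)
    qed
    then show ?thesis by (simp only: prod.distrib prod_constant card_lessThan)
  qed
  have cancel: "M ^ m * ((1 / M) ^ m * (\<Prod>i<m. g (ks ! i))) = (\<Prod>i<m. g (ks ! i))"
    if "ks \<in> compositions (k - 1) m" for ks m
  proof (cases "M = 0")
    case False then show ?thesis by (simp add: power_one_over)
  next
    case True
    then have "x = 1" using M x l by simp
    then have g0: "g j = 0" for j by (simp add: g_def t_def poly_Gp1)
    show ?thesis
    proof (cases m)
      case 0 then show ?thesis by simp
    next
      case (Suc m')
      then have "(\<Prod>i<m. g (ks ! i)) = 0" using g0 by simp
      then show ?thesis by simp
    qed
  qed
  have "rho_x K k x = rho_step K (\<lambda>i. rho_x K i) k x" by (rule rho_x_step)
  also have "\<dots> = (\<Sum>m<k. (exp (- M) * M ^ m / fact m) *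
           (\<Sum>ks\<in>compositions (k - 1) m. (1 / M) ^ m * (\<Prod>i<m. g (ks ! i))))"
  proof -
    have k0': "(k = 0) = False" using k0 by simp
    have "rho_step K (\<lambda>i. rho_x K i) k x = (\<Sum>m<k. (exp (- M) * M ^ m / fact m) *
           (\<Sum>ks\<in>compositions (k - 1) m. (\<Prod>i<m. (LINT y:{0<..1}|lborel. (K x y / M) * rho_x K (ks ! i) y))))"
      by (simp only: rho_step_def M_def[symmetric] k0' if_False)
    also have "\<dots> = (\<Sum>m<k. (exp (- M) * M ^ m / fact m) *
           (\<Sum>ks\<in>compositions (k - 1) m. (1 / M) ^ m * (\<Prod>i<m. g (ks ! i))))"
    proof (rule sum.cong[OF refl])
      fix m
      have "(\<Sum>ks\<in>compositions (k - 1) m. (\<Prod>i<m. (LINT y:{0<..1}|lborel. (K x y / M) * rho_x K (ks ! i) y)))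
          = (\<Sum>ks\<in>compositions (k - 1) m. (1 / M) ^ m * (\<Prod>i<m. g (ks ! i)))"
        by (rule sum.cong[OF refl]) (rule prodeq)
      then show "(exp (- M) * M ^ m / fact m) *
           (\<Sum>ks\<in>compositions (k - 1) m. (\<Prod>i<m. (LINT y:{0<..1}|lborel. (K x y / M) * rho_x K (ks ! i) y)))
          = (exp (- M) * M ^ m / fact m) * (\<Sum>ks\<in>compositions (k - 1) m. (1 / M) ^ m * (\<Prod>i<m. g (ks ! i)))"
        by (rule arg_cong)
    qed
    finally show ?thesis .
  qed
  also have "\<dots> = (\<Sum>m<k. t * ((\<Sum>ks\<in>compositions (k - 1) m. (\<Prod>i<m. g (ks ! i))) / fact m))"
  proof (rule sum.cong[OF refl])
    fix m
    have "M ^ m * (\<Sum>ks\<in>compositions (k - 1) m. (1 / M) ^ m * (\<Prod>i<m. g (ks ! i)))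
        = (\<Sum>ks\<in>compositions (k - 1) m. (\<Prod>i<m. g (ks ! i)))"
      by (simp add: sum_distrib_left cancel cong: sum.cong)
    then show "exp (- M) * M ^ m / fact m * (\<Sum>ks\<in>compositions (k - 1) m. (1 / M) ^ m * (\<Prod>i<m. g (ks ! i)))
        = t * ((\<Sum>ks\<in>compositions (k - 1) m. (\<Prod>i<m. g (ks ! i))) / fact m)"
      by (simp add: eM field_simps)
  qed
  also have "\<dots> = (\<Sum>m<k. t * ((evt t (GF l) ^ m) $ (k - 1) / fact m))"
  proof -
    have gF: "Abs_fps g = evt t (GF l)" by (rule fps_ext) (simp add: g_def GF_def)
    have "g 0 = 0" by (simp add: g_def Gp_def)
    then show ?thesis by (simp add: compositions_sum gF)
  qed
  also have "\<dots> = poly (Pp l k) (x powr l)"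
  proof -
    obtain n where n: "k = Suc n" using k0 by (cases k) auto
    show ?thesis unfolding n using Pp_formula[of l n t]
      by (simp add: t_def sum_distrib_left atLeast0AtMost lessThan_Suc_atMost)
  qed
  finally show ?case unfolding K_def .
qed


definition rf :: "real set \<Rightarrow> (real \<Rightarrow> real) \<Rightarrow> bool" where
  "rf S f \<longleftrightarrow> (\<exists>P Q. Q \<noteq> 0 \<and> (\<forall>z. poly Q z = 0 \<longrightarrow> z \<in> S) \<and> (\<forall>l>0. f l = poly P l / poly Q l))"

definition SS :: "nat \<Rightarrow> real set" where
  "SS k = {z. \<exists>j\<in>{1..k}. z = - 1 / real j}"

lemma SS_nonpos: "z \<in> SS k \<Longrightarrow> z \<le> 0"
  by (auto simp: SS_def)

lemma SS_mono: "m \<le> k \<Longrightarrow> SS m \<subseteq> SS k"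
  by (auto simp: SS_def)

lemma rf_cong: "rf S f \<Longrightarrow> (\<And>l. 0 < l \<Longrightarrow> f l = g l) \<Longrightarrow> rf S g"
  unfolding rf_def by metis

lemma rf_mono: "rf S f \<Longrightarrow> S \<subseteq> T \<Longrightarrow> rf T f"
  unfolding rf_def by blast

lemma rf_const: "rf S (\<lambda>_. c)"
  unfolding rf_def by (rule exI[of _ "[:c:]"], rule exI[of _ 1]) auto

lemma rf_nz: "(\<And>z. z \<in> S \<Longrightarrow> z \<le> 0) \<Longrightarrow> (\<forall>z. poly Q z = 0 \<longrightarrow> z \<in> S) \<Longrightarrow> 0 < l \<Longrightarrow> poly Q (l::real) \<noteq> 0"
proof
  assume a: "\<And>z. z \<in> S \<Longrightarrow> z \<le> 0" "\<forall>z. poly Q z = 0 \<longrightarrow> z \<in> S" "0 < l" "poly Q l = 0"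
  then have "l \<in> S" by blast
  then show False using a by force
qed

lemma rf_add:
  assumes S: "\<And>z. z \<in> S \<Longrightarrow> z \<le> 0" and f: "rf S f" and g: "rf S g"
  shows "rf S (\<lambda>l. f l + g l)"
proof -
  obtain P1 Q1 where 1: "Q1 \<noteq> 0" "\<forall>z. poly Q1 z = 0 \<longrightarrow> z \<in> S" "\<forall>l>0. f l = poly P1 l / poly Q1 l"
    using f unfolding rf_def by blast
  obtain P2 Q2 where 2: "Q2 \<noteq> 0" "\<forall>z. poly Q2 z = 0 \<longrightarrow> z \<in> S" "\<forall>l>0. g l = poly P2 l / poly Q2 l"
    using g unfolding rf_def by blast
  show ?thesis unfolding rf_def
  proof (intro exI conjI allI impI)
    show "Q1 * Q2 \<noteq> 0" using 1 2 by simp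
    show "z \<in> S" if "poly (Q1 * Q2) z = 0" for z using that 1 2 by auto
    fix l :: real assume l: "0 < l"
    have "poly Q1 l \<noteq> 0" "poly Q2 l \<noteq> 0" using rf_nz[OF S] 1 2 l by blast+
    then show "f l + g l = poly (P1 * Q2 + P2 * Q1) l / poly (Q1 * Q2) l"
      using 1 2 l by (simp add: field_simps)
  qed
qed

lemma rf_mult:
  assumes S: "\<And>z. z \<in> S \<Longrightarrow> z \<le> 0" and f: "rf S f" and g: "rf S g"
  shows "rf S (\<lambda>l. f l * g l)"
proof -
  obtain P1 Q1 where 1: "Q1 \<noteq> 0" "\<forall>z. poly Q1 z = 0 \<longrightarrow> z \<in> S" "\<forall>l>0. f l = poly P1 l / poly Q1 l"
    using f unfolding rf_def by blast
  obtain P2 Q2 where 2: "Q2 \<noteq> 0" "\<forall>z. poly Q2 z = 0 \<longrightarrow> z \<in> S" "\<forall>l>0. g l = poly P2 l / poly Q2 l"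
    using g unfolding rf_def by blast
  show ?thesis unfolding rf_def
  proof (intro exI conjI allI impI)
    show "Q1 * Q2 \<noteq> 0" using 1 2 by simp
    show "z \<in> S" if "poly (Q1 * Q2) z = 0" for z using that 1 2 by auto
    fix l :: real assume l: "0 < l"
    show "f l * g l = poly (P1 * P2) l / poly (Q1 * Q2) l"
      using 1 2 l by simp
  qed
qed

lemma rf_sum:
  assumes S: "\<And>z. z \<in> S \<Longrightarrow> z \<le> 0" and f: "\<And>i. i \<in> I \<Longrightarrow> rf S (f i)"
  shows "rf S (\<lambda>l. \<Sum>i\<in>I. f i l)"
  using f
proof (induction I rule: infinite_finite_induct)
  case (infinite A) then show ?case by (simp add: rf_const)
next
  case empty then show ?case by (simp add: rf_const)
next
  case (insert a F)
  then have "rf S (\<lambda>l. f a l + (\<Sum>i\<in>F. f i l))"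
    by (intro rf_add[OF S]) auto
  then show ?case using insert.hyps by simp
qed

lemma rf_inv:
  assumes "0 < i"
  shows "rf {- 1 / real i} (\<lambda>l. 1 / (real i * l + 1))"
  unfolding rf_def
proof (intro exI conjI allI impI)
  show "[:1, real i:] \<noteq> 0" by simp
  show "z \<in> {- 1 / real i}" if "poly [:1, real i:] z = 0" for z
    using that assms by (simp add: field_simps)
  show "1 / (real i * l + 1) = poly 1 l / poly [:1, real i:] l" for l
    by (simp add: algebra_simps)
qed

lemma rf_cc_rr:
  "(\<forall>i. rf (SS k) (\<lambda>l. cc l k i)) \<and> rf (SS k) (\<lambda>l. rr l k)"
proof (induction k rule: less_induct)
  case (less k)
  have S: "\<And>z. z \<in> SS k \<Longrightarrow> z \<le> 0" by (rule SS_nonpos)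
  have lowcc: "rf (SS k) (\<lambda>l. cc l j i)" if "j < k" for j i
    using less.IH[OF that] SS_mono[of j k] that by (auto intro: rf_mono)
  have lowrr: "rf (SS k) (\<lambda>l. rr l j)" if "j < k" for j
    using less.IH[OF that] SS_mono[of j k] that by (auto intro: rf_mono)
  have lt: "rf (SS k) (\<lambda>l. cc l k i)" if "i < k" for i
  proof (cases "i = 0 \<or> k = 1")
    case True
    then have "i = 0 \<or> (k = 1 \<and> i = 0)" using that by auto
    then show ?thesis by (auto intro: rf_cong[OF rf_const[of _ 0]])
  next
    case False
    then have k2: "2 \<le> k" "1 \<le> i" using that by auto
    have "rf (SS k) (\<lambda>l. (\<Sum>j=1..k-1. real j * rr l (k-j) * cc l j i) * (1 / real (k - i)))"
      by (intro rf_mult[OF S] rf_sum[OF S] rf_const lowrr lowcc) auto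
    then show ?thesis
      by (rule rf_cong) (simp add: cc_lt[OF k2 that])
  qed
  have cck: "rf (SS k) (\<lambda>l. cc l k i)" for i
  proof -
    consider "i < k" | "i = k" "k < 2" | "i = k" "2 \<le> k" | "k < i" by linarith
    then show ?thesis
    proof cases
      case 1 then show ?thesis by (rule lt)
    next
      case 2
      then have "k = 0 \<or> k = 1" by auto
      then show ?thesis using 2
        by (auto intro: rf_cong[OF rf_const[of _ 0]] rf_cong[OF rf_const[of _ 1]] simp: cc.simps)
    next
      case 3
      have "rf (SS k) (\<lambda>l. (\<Sum>i'<k. cc l k i') * (-1))"
        by (intro rf_mult[OF S] rf_sum[OF S] rf_const lt) auto
      then show ?thesis by (rule rf_cong) (simp add: cc_diag[OF 3(2)] 3(1))
    next
      case 4 then show ?thesis by (intro rf_cong[OF rf_const[of _ 0]]) (simp add: cc_gt)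
    qed
  qed
  have "rf (SS k) (\<lambda>l. \<Sum>i\<le>k. cc l k i * (if i = 0 then 0 else 1 / (real i * l + 1)))"
  proof (intro rf_sum[OF S] rf_mult[OF S] cck)
    fix i assume "i \<in> {..k}"
    show "rf (SS k) (\<lambda>l. if i = 0 then 0 else 1 / (real i * l + 1))"
    proof (cases "i = 0")
      case True then show ?thesis by (simp add: rf_const)
    next
      case False
      then have "{- 1 / real i} \<subseteq> SS k" using \<open>i \<in> {..k}\<close> by (auto simp: SS_def)
      then show ?thesis using False by (auto intro: rf_mono[OF rf_inv])
    qed
  qed
  then have "rf (SS k) (\<lambda>l. rr l k)"
    by (rule rf_cong) (auto simp: rr_def intro!: sum.cong)
  then show ?case using cck by blast
qed


lemma rho_eq: "0 < l \<Longrightarrow> 1 \<le> k \<Longrightarrow> rho (\<lambda>x y. l * kappa x y) k = rr l k"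
proof -
  assume l: "0 < l" and k: "1 \<le> k"
  have "rho (\<lambda>x y. l * kappa x y) k = (LINT y:{0<..1}|lborel. poly (Pp l k) (y powr l))"
    unfolding rho_def by (rule set_lebesgue_integral_cong) (use rho_x_poly[OF l k] in auto)
  also have "\<dots> = rr l k" using int_Pp[OF l] by blast
  finally show ?thesis .
qed

lemma rr1: "rr l 1 = 1 / (1 + l)"
  by (simp add: rr_def cc.simps add.commute)

lemma rr_ext: "j \<le> K \<Longrightarrow> rr l j = (\<Sum>i\<le>K. cc l j i / (real i * l + 1))"
  unfolding rr_def by (rule sum.mono_neutral_left) (auto simp: cc_gt)

lemma sym_sum:
  fixes f :: "nat \<Rightarrow> real"
  assumes "\<And>j. j \<in> {1..k-1} \<Longrightarrow> f (k - j) = f j"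
  shows "(\<Sum>j=1..k-1. real j * f j) = real k / 2 * (\<Sum>j=1..k-1. f j)"
proof -
  have "(\<Sum>j=1..k-1. real j * f j) = (\<Sum>j=1..k-1. real (k - j) * f (k - j))"
    by (rule sum.reindex_bij_witness[of _ "\<lambda>j. k - j" "\<lambda>j. k - j"]) auto
  also have "\<dots> = (\<Sum>j=1..k-1. (real k - real j) * f j)"
    by (rule sum.cong[OF refl]) (use assms in \<open>auto simp: of_nat_diff\<close>)
  finally have "2 * (\<Sum>j=1..k-1. real j * f j) = (\<Sum>j=1..k-1. real j * f j) + (\<Sum>j=1..k-1. (real k - real j) * f j)"
    by simp
  also have "\<dots> = real k * (\<Sum>j=1..k-1. f j)"
    by (simp add: sum.distrib[symmetric] sum_distrib_left algebra_simps)
  finally show ?thesis by simp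
qed

lemma rr_rec:
  assumes l: "0 < l" and k: "2 \<le> k"
  shows "rr l k = real k * l / (2 * (1 + real k * l)) * (\<Sum>j=1..k-1. rr l (k - j) * rr l j)"
proof -
  have e1: "(real k - real i) * cc l k i = (\<Sum>j=1..k-1. real j * rr l (k-j) * cc l j i)" for i
    using cc_ode[of k i l] k by (simp add: algebra_simps)
  have A: "(\<Sum>i\<le>k. l * ((real k - real i) * cc l k i / (real i * l + 1))) = (real k * l + 1) * rr l k"
  proof -
    have "(\<Sum>i\<le>k. l * ((real k - real i) * cc l k i / (real i * l + 1)))
        = (\<Sum>i\<le>k. (real k * l + 1) * (cc l k i / (real i * l + 1)) - cc l k i)"
    proof (rule sum.cong[OF refl])
      fix i
      have "real i * l \<ge> 0" using l by simp
      then have "real i * l + 1 > 0" by linarith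
      then show "l * ((real k - real i) * cc l k i / (real i * l + 1)) = (real k * l + 1) * (cc l k i / (real i * l + 1)) - cc l k i"
        by (simp add: field_simps)
    qed
    also have "\<dots> = (real k * l + 1) * rr l k"
      using cc_sum1[of k l] k by (simp add: sum_subtractf sum_distrib_left rr_def times_divide_eq_right)
    finally show ?thesis .
  qed
  have B: "(\<Sum>i\<le>k. (real k - real i) * cc l k i / (real i * l + 1)) = (\<Sum>j=1..k-1. real j * rr l (k-j) * rr l j)"
  proof -
    have "(\<Sum>i\<le>k. (real k - real i) * cc l k i / (real i * l + 1))
        = (\<Sum>i\<le>k. \<Sum>j=1..k-1. real j * rr l (k-j) * (cc l j i / (real i * l + 1)))"
      by (simp add: e1 sum_divide_distrib)
    also have "\<dots> = (\<Sum>j=1..k-1. real j * rr l (k-j) * (\<Sum>i\<le>k. cc l j i / (real i * l + 1)))"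
      by (subst sum.swap) (simp add: sum_distrib_left)
    also have "\<dots> = (\<Sum>j=1..k-1. real j * rr l (k-j) * rr l j)"
      by (rule sum.cong[OF refl]) (auto simp: rr_ext[of _ k])
    finally show ?thesis .
  qed
  have "(real k * l + 1) * rr l k = l * (\<Sum>j=1..k-1. real j * (rr l (k-j) * rr l j))"
  proof -
    have "(real k * l + 1) * rr l k = l * (\<Sum>i\<le>k. (real k - real i) * cc l k i / (real i * l + 1))"
      by (simp only: sum_distrib_left A)
    also have "\<dots> = l * (\<Sum>j=1..k-1. real j * rr l (k-j) * rr l j)" by (simp only: B)
    finally show ?thesis by (simp add: mult.assoc)
  qed
  also have "\<dots> = l * (real k / 2 * (\<Sum>j=1..k-1. rr l (k-j) * rr l j))"
    by (subst sym_sum) (auto simp: mult.commute)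
  finally have "(real k * l + 1) * rr l k = l * (real k / 2 * (\<Sum>j=1..k-1. rr l (k-j) * rr l j))" .
  moreover have "real k * l + 1 > 0"
  proof -
    have "real k * l \<ge> 0" using l by simp
    then show ?thesis by linarith
  qed
  ultimately show ?thesis by (simp add: field_simps)
qed

lemma tp_Pp: "1 \<le> k \<Longrightarrow> tp (Pp l k) = smult (real k) (Pp l k) - (\<Sum>j=1..k-1. smult (real j * rr l (k-j)) (Pp l j))"
  by (simp add: poly_eq_iff coeff_tp coeff_Pp coeff_sum cc_ode[of k _ l] mult.assoc)

lemma deriv_poly_powr:
  assumes "0 < x"
  shows "((\<lambda>y. poly P (y powr l)) has_real_derivative poly (pderiv P) (x powr l) * (l * x powr (l - 1))) (at x)"
  using DERIV_chain2[OF poly_DERIV has_real_derivative_powr[OF assms]] by simp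


theorem theorem6p5:
  fixes lam :: real
  assumes "lam > 0"
  shows "(rho (\<lambda>x y. lam * kappa x y) 1 = 1 / (1 + lam)) \<and>
    (\<forall>k\<ge>2. rho (\<lambda>x y. lam * kappa x y) k =
            real k * lam / (2 * (1 + real k * lam)) *
            (\<Sum>j=1..k-1. rho (\<lambda>x y. lam * kappa x y) (k - j) * rho (\<lambda>x y. lam * kappa x y) j)) \<and>
    (\<forall>k\<ge>1. \<exists>P Q :: real poly. Q \<noteq> 0 \<and>
            (\<forall>z. poly Q z = 0 \<longrightarrow> (\<exists>j\<in>{1..k}. z = - 1 / real j)) \<and>
            (\<forall>l>0. rho (\<lambda>x y. l * kappa x y) k = poly P l / poly Q l)) \<and>
    (\<forall>k\<ge>1. \<exists>(N::nat) (P :: nat \<Rightarrow> real poly) (Q :: nat \<Rightarrow> real poly).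
            (\<forall>i\<le>N. Q i \<noteq> 0) \<and>
            (\<forall>l>0. \<forall>x\<in>{0<..1}. rho_x (\<lambda>x y. l * kappa x y) k x =
                 (\<Sum>i\<le>N. poly (P i) l / poly (Q i) l * (x powr l) ^ i))) \<and>
    (\<forall>k\<ge>1. \<forall>x\<in>{0<..1}. \<exists>D.
            (rho_x (\<lambda>x y. lam * kappa x y) k has_real_derivative D) (at x within {0<..1}) \<and>
            x * D = real k * lam * rho_x (\<lambda>x y. lam * kappa x y) k x -
              (\<Sum>j=1..k-1. real j * lam * rho (\<lambda>x y. lam * kappa x y) (k - j)
                             * rho_x (\<lambda>x y. lam * kappa x y) j x)) \<and>
    (rho_x (\<lambda>x y. lam * kappa x y) 1 1 = 1) \<and>
    (\<forall>k\<ge>2. rho_x (\<lambda>x y. lam * kappa x y) k 1 = 0)"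
proof -
  have l: "0 < lam" by (rule assms)
  have P1: "rho (\<lambda>x y. lam * kappa x y) 1 = 1 / (1 + lam)"
    using rho_eq[OF l, of 1] rr1[of lam] by simp
  have P2: "\<forall>k\<ge>2. rho (\<lambda>x y. lam * kappa x y) k =
            real k * lam / (2 * (1 + real k * lam)) *
            (\<Sum>j=1..k-1. rho (\<lambda>x y. lam * kappa x y) (k - j) * rho (\<lambda>x y. lam * kappa x y) j)"
  proof (intro allI impI)
    fix k :: nat assume k: "2 \<le> k"
    have "(\<Sum>j=1..k-1. rho (\<lambda>x y. lam * kappa x y) (k - j) * rho (\<lambda>x y. lam * kappa x y) j)
        = (\<Sum>j=1..k-1. rr lam (k - j) * rr lam j)"
      by (rule sum.cong[OF refl]) (auto simp: rho_eq[OF l])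
    then show "rho (\<lambda>x y. lam * kappa x y) k =
            real k * lam / (2 * (1 + real k * lam)) *
            (\<Sum>j=1..k-1. rho (\<lambda>x y. lam * kappa x y) (k - j) * rho (\<lambda>x y. lam * kappa x y) j)"
      using rho_eq[OF l, of k] rr_rec[OF l k] k by simp
  qed
  have P3: "\<forall>k\<ge>1. \<exists>P Q :: real poly. Q \<noteq> 0 \<and>
            (\<forall>z. poly Q z = 0 \<longrightarrow> (\<exists>j\<in>{1..k}. z = - 1 / real j)) \<and>
            (\<forall>l>0. rho (\<lambda>x y. l * kappa x y) k = poly P l / poly Q l)"
  proof (intro allI impI)
    fix k :: nat assume k: "1 \<le> k"
    obtain P Q where PQ: "Q \<noteq> 0" "\<forall>z. poly Q z = 0 \<longrightarrow> z \<in> SS k" "\<forall>l>0. rr l k = poly P l / poly Q l"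
      using conjunct2[OF rf_cc_rr[of k]] unfolding rf_def by blast
    show "\<exists>P Q :: real poly. Q \<noteq> 0 \<and>
            (\<forall>z. poly Q z = 0 \<longrightarrow> (\<exists>j\<in>{1..k}. z = - 1 / real j)) \<and>
            (\<forall>l>0. rho (\<lambda>x y. l * kappa x y) k = poly P l / poly Q l)"
      using PQ rho_eq[OF _ k] by (intro exI[of _ P] exI[of _ Q]) (auto simp: SS_def)
  qed
  have P4: "\<forall>k\<ge>1. \<exists>(N::nat) (P :: nat \<Rightarrow> real poly) (Q :: nat \<Rightarrow> real poly).
            (\<forall>i\<le>N. Q i \<noteq> 0) \<and>
            (\<forall>l>0. \<forall>x\<in>{0<..1}. rho_x (\<lambda>x y. l * kappa x y) k x =
                 (\<Sum>i\<le>N. poly (P i) l / poly (Q i) l * (x powr l) ^ i))"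
  proof (intro allI impI)
    fix k :: nat assume k: "1 \<le> k"
    have "\<forall>i. \<exists>PQ. snd PQ \<noteq> 0 \<and> (\<forall>l>0. cc l k i = poly (fst PQ) l / poly (snd PQ) l)"
    proof
      fix i
      obtain P Q where "Q \<noteq> 0" "\<forall>l>0. cc l k i = poly P l / poly Q l"
        using conjunct1[OF rf_cc_rr[of k]] unfolding rf_def by blast
      then show "\<exists>PQ. snd PQ \<noteq> 0 \<and> (\<forall>l>0. cc l k i = poly (fst PQ) l / poly (snd PQ) l)"
        by (intro exI[of _ "(P, Q)"]) auto
    qed
    then obtain F where F: "\<And>i. snd (F i) \<noteq> 0" "\<And>i l. 0 < l \<Longrightarrow> cc l k i = poly (fst (F i)) l / poly (snd (F i)) l"
      by metis
    show "\<exists>(N::nat) (P :: nat \<Rightarrow> real poly) (Q :: nat \<Rightarrow> real poly).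
            (\<forall>i\<le>N. Q i \<noteq> 0) \<and>
            (\<forall>l>0. \<forall>x\<in>{0<..1}. rho_x (\<lambda>x y. l * kappa x y) k x =
                 (\<Sum>i\<le>N. poly (P i) l / poly (Q i) l * (x powr l) ^ i))"
    proof (rule exI[of _ k], rule exI[of _ "\<lambda>i. fst (F i)"], rule exI[of _ "\<lambda>i. snd (F i)"], intro conjI allI impI ballI)
      show "snd (F i) \<noteq> 0" for i by (rule F(1))
    next
      fix l x :: real assume l': "0 < l" and x: "x \<in> {0<..1}"
      have "rho_x (\<lambda>x y. l * kappa x y) k x = poly (Pp l k) (x powr l)"
        by (rule rho_x_poly[OF l' k x])
      also have "\<dots> = (\<Sum>i\<le>k. cc l k i * (x powr l) ^ i)"
        by (simp add: Pp_def poly_sum poly_monom)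
      also have "\<dots> = (\<Sum>i\<le>k. poly (fst (F i)) l / poly (snd (F i)) l * (x powr l) ^ i)"
        using F(2)[OF l'] by simp
      finally show "rho_x (\<lambda>x y. l * kappa x y) k x = (\<Sum>i\<le>k. poly (fst (F i)) l / poly (snd (F i)) l * (x powr l) ^ i)" .
    qed
  qed
  have P5: "\<forall>k\<ge>1. \<forall>x\<in>{0<..1}. \<exists>D.
            (rho_x (\<lambda>x y. lam * kappa x y) k has_real_derivative D) (at x within {0<..1}) \<and>
            x * D = real k * lam * rho_x (\<lambda>x y. lam * kappa x y) k x -
              (\<Sum>j=1..k-1. real j * lam * rho (\<lambda>x y. lam * kappa x y) (k - j)
                             * rho_x (\<lambda>x y. lam * kappa x y) j x)"
  proof (intro allI impI ballI)
    fix k :: nat and x :: real assume k: "1 \<le> k" and x: "x \<in> {0<..1}"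
    have x0: "0 < x" using x by simp
    define t where "t = x powr lam"
    define D where "D = poly (pderiv (Pp lam k)) t * (lam * x powr (lam - 1))"
    have d1: "((\<lambda>y. poly (Pp lam k) (y powr lam)) has_real_derivative D) (at x within {0<..1})"
      unfolding D_def t_def by (rule has_field_derivative_at_within[OF deriv_poly_powr[OF x0]])
    have d2: "(rho_x (\<lambda>x y. lam * kappa x y) k has_real_derivative D) (at x within {0<..1})"
      by (rule has_field_derivative_transform_within[OF d1 zero_less_one x])
         (use rho_x_poly[OF l k] in auto)
    have xx: "x * x powr (lam - 1) = t"
      using x0 by (simp add: t_def powr_diff)
    have "x * D = lam * poly (tp (Pp lam k)) t"
      by (simp add: D_def tp_def xx[symmetric] mult_ac)
    also have "\<dots> = lam * (real k * poly (Pp lam k) t - (\<Sum>j=1..k-1. real j * rr lam (k-j) * poly (Pp lam j) t))"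
      by (simp add: tp_Pp[OF k] poly_sum)
    also have "\<dots> = real k * lam * rho_x (\<lambda>x y. lam * kappa x y) k x -
              (\<Sum>j=1..k-1. real j * lam * rho (\<lambda>x y. lam * kappa x y) (k - j)
                             * rho_x (\<lambda>x y. lam * kappa x y) j x)"
    proof -
      have "(\<Sum>j=1..k-1. real j * lam * rho (\<lambda>x y. lam * kappa x y) (k - j) * rho_x (\<lambda>x y. lam * kappa x y) j x)
          = lam * (\<Sum>j=1..k-1. real j * rr lam (k-j) * poly (Pp lam j) t)"
        unfolding sum_distrib_left
        by (rule sum.cong[OF refl]) (auto simp: rho_eq[OF l] rho_x_poly[OF l _ x] t_def)
      then show ?thesis using rho_x_poly[OF l k x] by (simp add: t_def algebra_simps)
    qed
    finally show "\<exists>D. (rho_x (\<lambda>x y. lam * kappa x y) k has_real_derivative D) (at x within {0<..1}) \<and>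
            x * D = real k * lam * rho_x (\<lambda>x y. lam * kappa x y) k x -
              (\<Sum>j=1..k-1. real j * lam * rho (\<lambda>x y. lam * kappa x y) (k - j)
                             * rho_x (\<lambda>x y. lam * kappa x y) j x)"
      using d2 by blast
  qed
  have P6: "rho_x (\<lambda>x y. lam * kappa x y) 1 1 = 1"
    using rho_x_poly[OF l, of 1 1] poly_Pp1[of lam 1] by simp
  have P7: "\<forall>k\<ge>2. rho_x (\<lambda>x y. lam * kappa x y) k 1 = 0"
    using rho_x_poly[OF l, of _ 1] poly_Pp1[of lam] by auto
  show ?thesis using P1 P2 P3 P4 P5 P6 P7 by blast
qed


end
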